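(* Consider the fifth-order WENO reconstruction of the numerical flux $\hat f_{i\pm\frac12}=\sum_{m=0}^{2}\omega_{m,i\pm\frac12}\hat f^m_{i\pm\frac12}$ on a uniform grid $x_i=x_0+i\Delta x$, for a smooth function $f$. Use the WENO-Z weights with $\epsilon=0$, $$\omega_{m}=\frac{\alpha_m}{\sum_{l=0}^2\alpha_l},\qquad \alpha_m=d_m\Bigl[1+\Bigl(\frac{\tau_5}{\beta^{DS}_{m}}\Bigr)^2\Bigr],\qquad (d_0,d_1,d_2)=\Bigl(\tfrac1{10},\tfrac6{10},\tfrac3{10}\Bigr),$$ where the modified smoothness indicators are $\beta^{DS}_{m,i\pm\frac12}=\beta_{m,i\pm\frac12}(\delta_{m,i}+C)$ and $\tau_5=|\beta_0-\beta_2|$. Assume the multipliers satisfy $\delta_{1,i}=\Phi(\bar x_i)$ and $\delta_{0,i}=\Phi(\bar x_i)+O(\Delta x)$, $\delta_{2,i}=\Phi(\bar x_i)+O(\Delta x)$ for some function $\Phi$ of the stencil $\bar x_i=(x_{i-k},\dots,x_{i+k})$, and that the constant $C$ is chosen so that $P(\bar x_i):=\Phi(\bar x_i)+C>\kappa>0$ for a fixed $\kappa$ (with $P=O(1)$). Then at non-critical points, i.e. where $f_x\neq 0$, $$\omega^{DS}_{m,i\pm\frac12}=d_m+O(\Delta x^6),\qquad m=0,1,2,$$ so in particular the sufficient condition $\omega_m^{\pm}-d_m=O(\Delta x^3)$ for fifth-order accuracy holds and the resulting WENO-Z scheme with the modified smoothness indicators is fifth-order accurate there.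
   Context: Fifth-order WENO: on the stencil $\{x_{i-2},\dots,x_{i+2}\}$, with $f_j=f(u(x_j))$, the candidate fluxes are $\hat f^0_{i+\frac12}=\frac{2f_{i-2}-7f_{i-1}+11f_i}{6}$, $\hat f^1_{i+\frac12}=\frac{-f_{i-1}+5f_i+2f_{i+1}}{6}$, $\hat f^2_{i+\frac12}=\frac{2f_i+5f_{i+1}-f_{i+2}}{6}$ (the $i-\frac12$ versions by shifting all indices by $-1$). The Jiang–Shu smoothness indicators for $\hat f_{i+\frac12}$ are $\beta_0=\frac{13}{12}(f_{i-2}-2f_{i-1}+f_i)^2+\frac14(f_{i-2}-4f_{i-1}+3f_i)^2$, $\beta_1=\frac{13}{12}(f_{i-1}-2f_i+f_{i+1})^2+\frac14(-f_{i-1}+f_{i+1})^2$, $\beta_2=\frac{13}{12}(f_i-2f_{i+1}+f_{i+2})^2+\frac14(3f_i-4f_{i+1}+f_{i+2})^2$; those for $\hat f_{i-\frac12}$ are obtained by index shift $-1$. For smooth $f$ these satisfy $\beta_m=f_x^2\Delta x^2+O(\Delta x^4)$ and $\tau_5=|\beta_0-\beta_2|=\frac{13}{3}|f_{xx}f_{xxx}|\Delta x^5+O(\Delta x^6)$. The same multiplier $\delta_{m,i}$ (depending only on the global stencil position $i$) is used for both $\beta_{m,i+\frac12}$ and $\beta_{m,i-\frac12}$; in the paper $\delta_{m,i}$ are outputs of a convolutional neural network with differentiable activations and receptive field of size $2k+1$, and $\delta_{0,i+1}=\delta_{1,i}=\delta_{2,i-1}$. *)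

theory Defs
  imports "HOL-Analysis.Analysis" "HOL-Library.Landau_Symbols"
begin

text \<open>Grid values are given as a function g :: int => real, g j = f(x_j).
  The Jiang--Shu smoothness indicators for the flux at j+1/2
  (the ones for j-1/2 are obtained by evaluating at j-1).\<close>

definition beta0 :: "(int \<Rightarrow> real) \<Rightarrow> int \<Rightarrow> real" where
  "beta0 g j = 13/12 * (g (j-2) - 2 * g (j-1) + g j)^2
             + 1/4 * (g (j-2) - 4 * g (j-1) + 3 * g j)^2"

definition beta1 :: "(int \<Rightarrow> real) \<Rightarrow> int \<Rightarrow> real" where
  "beta1 g j = 13/12 * (g (j-1) - 2 * g j + g (j+1))^2
             + 1/4 * (- g (j-1) + g (j+1))^2"

definition beta2 :: "(int \<Rightarrow> real) \<Rightarrow> int \<Rightarrow> real" where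
  "beta2 g j = 13/12 * (g j - 2 * g (j+1) + g (j+2))^2
             + 1/4 * (3 * g j - 4 * g (j+1) + g (j+2))^2"

definition weno_beta :: "(int \<Rightarrow> real) \<Rightarrow> int \<Rightarrow> nat \<Rightarrow> real" where
  "weno_beta g j m = (if m = 0 then beta0 g j else if m = 1 then beta1 g j else beta2 g j)"

definition tau5 :: "(int \<Rightarrow> real) \<Rightarrow> int \<Rightarrow> real" where
  "tau5 g j = \<bar>beta0 g j - beta2 g j\<bar>"

definition dlin :: "nat \<Rightarrow> real" where
  "dlin m = (if m = 0 then 1/10 else if m = 1 then 6/10 else 3/10)"

definition betaDS :: "(int \<Rightarrow> real) \<Rightarrow> int \<Rightarrow> (nat \<Rightarrow> real) \<Rightarrow> real \<Rightarrow> nat \<Rightarrow> real" where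
  "betaDS g j \<delta> C m = weno_beta g j m * (\<delta> m + C)"

definition alphaDS :: "(int \<Rightarrow> real) \<Rightarrow> int \<Rightarrow> (nat \<Rightarrow> real) \<Rightarrow> real \<Rightarrow> nat \<Rightarrow> real" where
  "alphaDS g j \<delta> C m = dlin m * (1 + (tau5 g j / betaDS g j \<delta> C m)^2)"

definition omegaDS :: "(int \<Rightarrow> real) \<Rightarrow> int \<Rightarrow> (nat \<Rightarrow> real) \<Rightarrow> real \<Rightarrow> nat \<Rightarrow> real" where
  "omegaDS g j \<delta> C m = alphaDS g j \<delta> C m / (\<Sum>l<3. alphaDS g j \<delta> C l)"

definition stencil :: "real \<Rightarrow> nat \<Rightarrow> real \<Rightarrow> real list" where
  "stencil x k h = map (\<lambda>j. x + real_of_int j * h) [- int k..int k]"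

end

theory Submission
  imports Defs
begin

lemma taylor_bound:
  fixes f :: "real \<Rightarrow> real"
  assumes smooth: "\<And>n y. ((deriv ^^ n) f has_real_derivative (deriv ^^ Suc n) f y) (at y)"
  shows "\<exists>M\<ge>0. \<forall>t. \<bar>t\<bar> \<le> 3 \<longrightarrow>
     \<bar>f (x + t) - (\<Sum>n<N. (deriv ^^ n) f x / fact n * t ^ n)\<bar> \<le> M * \<bar>t\<bar> ^ N"
proof -
  let ?D = "\<lambda>n. (deriv ^^ n) f"
  have cont: "continuous_on {x-3..x+3} (?D N)"
    using smooth by (meson DERIV_isCont continuous_at_imp_continuous_on)
  have "compact (?D N ` {x-3..x+3})"
    by (rule compact_continuous_image[OF cont]) simp
  then obtain B where B: "\<And>y. y \<in> {x-3..x+3} \<Longrightarrow> \<bar>?D N y\<bar> \<le> B"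
    using compact_imp_bounded bounded_iff by (metis image_eqI real_norm_def)
  have B0: "B \<ge> 0" using B[of x] by auto
  show ?thesis
  proof (intro exI[of _ "B / fact N"] conjI allI impI)
    show "B / fact N \<ge> 0" using B0 by simp
    fix t :: real assume t: "\<bar>t\<bar> \<le> 3"
    have "\<exists>s. \<bar>s\<bar> \<le> \<bar>t\<bar> \<and> (\<lambda>y. f (x + y)) t = (\<Sum>m<N. ((\<lambda>m y. ?D m (x + y)) m 0 / fact m) * t ^ m) + ((\<lambda>m y. ?D m (x + y)) N s / fact N) * t ^ N"
    proof (rule Maclaurin_all_le)
      show "(\<lambda>m y. ?D m (x + y)) 0 = (\<lambda>y. f (x + y))" by simp
      show "\<forall>m y. ((\<lambda>m y. ?D m (x + y)) m has_real_derivative (\<lambda>m y. ?D m (x + y)) (Suc m) y) (at y)"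
      proof (intro allI)
        fix m y
        have "(?D m has_real_derivative ?D (Suc m) (y + x)) (at (y + x))" by (rule smooth)
        hence "((\<lambda>y. ?D m (y + x)) has_real_derivative ?D (Suc m) (y + x)) (at y)"
          by (simp add: DERIV_shift)
        thus "((\<lambda>m y. ?D m (x + y)) m has_real_derivative (\<lambda>m y. ?D m (x + y)) (Suc m) y) (at y)"
          by (simp add: add.commute)
      qed
    qed
    then obtain s where s: "\<bar>s\<bar> \<le> \<bar>t\<bar>"
      "f (x + t) = (\<Sum>m<N. ?D m x / fact m * t ^ m) + ?D N (x + s) / fact N * t ^ N"
      by auto
    have "\<bar>?D N (x + s)\<bar> \<le> B" using s(1) t by (intro B) auto
    hence "\<bar>?D N (x + s) / fact N * t ^ N\<bar> \<le> B / fact N * \<bar>t\<bar> ^ N"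
      by (simp add: abs_mult power_abs divide_right_mono mult_right_mono)
    thus "\<bar>f (x + t) - (\<Sum>n<N. ?D n x / fact n * t ^ n)\<bar> \<le> B / fact N * \<bar>t\<bar> ^ N"
      using s(2) by simp
  qed
qed

definition lc :: "(real \<Rightarrow> real) \<Rightarrow> real \<Rightarrow> (real \<times> real) list \<Rightarrow> real \<Rightarrow> real" where
  "lc f x cs h = (\<Sum>(a,j)\<leftarrow>cs. a * f (x + j * h))"

definition mom :: "(real \<times> real) list \<Rightarrow> nat \<Rightarrow> real" where
  "mom cs n = (\<Sum>(a,j)\<leftarrow>cs. a * j ^ n)"

lemma lc_expand:
  fixes f :: "real \<Rightarrow> real"
  assumes smooth: "\<And>n y. ((deriv ^^ n) f has_real_derivative (deriv ^^ Suc n) f y) (at y)"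
    and bnd: "\<forall>(a,j)\<in>set cs. \<bar>j\<bar> \<le> 3"
  shows "\<exists>K. \<forall>h. 0 < h \<and> h \<le> 1 \<longrightarrow>
     \<bar>lc f x cs h - (\<Sum>n<N. (deriv ^^ n) f x / fact n * h ^ n * mom cs n)\<bar> \<le> K * h ^ N"
proof -
  let ?D = "\<lambda>n. (deriv ^^ n) f"
  obtain M where M: "M \<ge> 0" "\<And>t. \<bar>t\<bar> \<le> 3 \<Longrightarrow>
     \<bar>f (x + t) - (\<Sum>n<N. ?D n x / fact n * t ^ n)\<bar> \<le> M * \<bar>t\<bar> ^ N"
    using taylor_bound[OF smooth, where N=N and x=x] by blast
  have "\<forall>h. 0 < h \<and> h \<le> 1 \<longrightarrow>
     \<bar>lc f x cs h - (\<Sum>n<N. ?D n x / fact n * h ^ n * mom cs n)\<bar>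
       \<le> (M * (\<Sum>(a,j)\<leftarrow>cs. \<bar>a\<bar> * \<bar>j\<bar> ^ N)) * h ^ N"
    using bnd
  proof (induction cs)
    case Nil
    then show ?case by (simp add: lc_def mom_def)
  next
    case (Cons p cs)
    obtain a j where p: "p = (a, j)" by force
    show ?case
    proof (intro allI impI)
      fix h :: real assume h: "0 < h \<and> h \<le> 1"
      have IH: "\<bar>lc f x cs h - (\<Sum>n<N. ?D n x / fact n * h ^ n * mom cs n)\<bar>
          \<le> (M * (\<Sum>(a,j)\<leftarrow>cs. \<bar>a\<bar> * \<bar>j\<bar> ^ N)) * h ^ N"
        using Cons h by auto
      have jb: "\<bar>j * h\<bar> \<le> 3" using Cons.prems p h
        by (auto simp: abs_mult) (smt (verit) mult_left_le mult_nonneg_nonneg)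
      have T: "\<bar>f (x + j * h) - (\<Sum>n<N. ?D n x / fact n * (j * h) ^ n)\<bar> \<le> M * \<bar>j * h\<bar> ^ N"
        by (rule M(2)[OF jb])
      have eq: "lc f x (p # cs) h - (\<Sum>n<N. ?D n x / fact n * h ^ n * mom (p # cs) n)
         = a * (f (x + j * h) - (\<Sum>n<N. ?D n x / fact n * (j * h) ^ n))
           + (lc f x cs h - (\<Sum>n<N. ?D n x / fact n * h ^ n * mom cs n))"
        by (simp add: p lc_def mom_def sum_distrib_left sum.distrib power_mult_distrib
            algebra_simps sum_subtractf)
      have "\<bar>a * (f (x + j * h) - (\<Sum>n<N. ?D n x / fact n * (j * h) ^ n))\<bar>
           \<le> \<bar>a\<bar> * (M * \<bar>j * h\<bar> ^ N)"
        unfolding abs_mult[of a] by (rule mult_left_mono[OF T]) simp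
      also have "\<dots> = M * (\<bar>a\<bar> * \<bar>j\<bar> ^ N) * h ^ N"
        using h by (simp add: abs_mult power_mult_distrib)
      finally have A: "\<bar>a * (f (x + j * h) - (\<Sum>n<N. ?D n x / fact n * (j * h) ^ n))\<bar>
           \<le> M * (\<bar>a\<bar> * \<bar>j\<bar> ^ N) * h ^ N" .
      show "\<bar>lc f x (p # cs) h - (\<Sum>n<N. ?D n x / fact n * h ^ n * mom (p # cs) n)\<bar>
          \<le> (M * (\<Sum>(a,j)\<leftarrow>p # cs. \<bar>a\<bar> * \<bar>j\<bar> ^ N)) * h ^ N"
        unfolding eq using A IH by (simp add: p algebra_simps)
    qed
  qed
  thus ?thesis by blast
qed

lemma lc_zero:
  fixes f :: "real \<Rightarrow> real"
  assumes smooth: "\<And>n y. ((deriv ^^ n) f has_real_derivative (deriv ^^ Suc n) f y) (at y)"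
    and bnd: "\<forall>(a,j)\<in>set cs. \<bar>j\<bar> \<le> 3"
    and z: "\<And>n. n < N \<Longrightarrow> mom cs n = 0"
  shows "\<exists>K. \<forall>h. 0 < h \<and> h \<le> 1 \<longrightarrow> \<bar>lc f x cs h\<bar> \<le> K * h ^ N"
  using lc_expand[OF smooth bnd, where N=N and x=x] z by simp

lemma lc_lower:
  fixes f :: "real \<Rightarrow> real"
  assumes smooth: "\<And>n y. ((deriv ^^ n) f has_real_derivative (deriv ^^ Suc n) f y) (at y)"
    and bnd: "\<forall>(a,j)\<in>set cs. \<bar>j\<bar> \<le> 3"
    and z: "mom cs 0 = 0" and o: "\<bar>mom cs 1\<bar> = 2"
    and nc: "deriv f x \<noteq> 0"
  shows "eventually (\<lambda>h. 0 < h \<and> h \<le> 1 \<and> \<bar>deriv f x\<bar> * h \<le> \<bar>lc f x cs h\<bar>) (at_right 0)"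
proof -
  obtain K where K: "\<And>h. 0 < h \<and> h \<le> 1 \<Longrightarrow>
     \<bar>lc f x cs h - (\<Sum>n<2. (deriv ^^ n) f x / fact n * h ^ n * mom cs n)\<bar> \<le> K * h ^ 2"
    using lc_expand[OF smooth bnd, where N=2 and x=x] by blast
  define K' where "K' = max K 1"
  have K'p: "K' > 0" by (simp add: K'_def)
  let ?b = "min 1 (\<bar>deriv f x\<bar> / K')"
  have bpos: "?b > 0" using nc K'p by simp
  show ?thesis unfolding eventually_at_right_field
  proof (rule exI[of _ ?b], rule conjI[OF bpos], intro allI impI)
    fix h :: real assume h: "h > 0" "h < ?b"
    have e: "(\<Sum>n<2. (deriv ^^ n) f x / fact n * h ^ n * mom cs n) = deriv f x * h * mom cs 1"
      using z by (simp add: numeral_2_eq_2)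
    have "\<bar>lc f x cs h - deriv f x * h * mom cs 1\<bar> \<le> K' * h ^ 2"
      using K[of h] h e by (smt (verit) K'_def max.cobounded1 mult_right_mono zero_le_power2)
    moreover have "\<bar>deriv f x * h * mom cs 1\<bar> = 2 * \<bar>deriv f x\<bar> * h"
      using o h by (simp add: abs_mult)
    moreover have "K' * h ^ 2 \<le> \<bar>deriv f x\<bar> * h"
    proof -
      have "K' * h \<le> \<bar>deriv f x\<bar>" using h K'p by (simp add: field_simps)
      hence "K' * h * h \<le> \<bar>deriv f x\<bar> * h" using h by (simp add: mult_right_mono)
      thus ?thesis by (simp add: power2_eq_square mult.assoc)
    qed
    ultimately show "0 < h \<and> h \<le> 1 \<and> \<bar>deriv f x\<bar> * h \<le> \<bar>lc f x cs h\<bar>" using h by linarith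
  qed
qed

lemma momtest: fixes r :: real shows "n < 4 \<Longrightarrow> mom [(1,r-2),(-4,r-1),(6,r),(-4,r+1),(1,r+2)] n = 0"
  by (auto simp: mom_def less_Suc_eq numeral_eq_Suc power2_eq_square power3_eq_cube algebra_simps)

lemma beta_diff_eq:
  fixes f :: "real \<Rightarrow> real" and i :: int
  defines "r \<equiv> real_of_int i"
  shows "beta0 (\<lambda>j. f (x + real_of_int j * h)) i - beta2 (\<lambda>j. f (x + real_of_int j * h)) i
    = 13/12 * lc f x [(1,r-2),(-2,r-1),(2,r+1),(-1,r+2)] h * lc f x [(1,r-2),(-2,r-1),(2,r),(-2,r+1),(1,r+2)] h
     + 1/4 * lc f x [(1,r-2),(-4,r-1),(4,r+1),(-1,r+2)] h * lc f x [(1,r-2),(-4,r-1),(6,r),(-4,r+1),(1,r+2)] h"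
  unfolding beta0_def beta2_def lc_def r_def
  by (simp add: power2_eq_square algebra_simps)

lemma beta_lower:
  fixes f :: "real \<Rightarrow> real" and i :: int
  defines "r \<equiv> real_of_int i"
  shows "beta0 (\<lambda>j. f (x + real_of_int j * h)) i \<ge> 1/4 * (lc f x [(1,r-2),(-4,r-1),(3,r)] h)^2"
    "beta1 (\<lambda>j. f (x + real_of_int j * h)) i \<ge> 1/4 * (lc f x [(-1,r-1),(1,r+1)] h)^2"
    "beta2 (\<lambda>j. f (x + real_of_int j * h)) i \<ge> 1/4 * (lc f x [(3,r),(-4,r+1),(1,r+2)] h)^2"
  unfolding beta0_def beta1_def beta2_def r_def
  by (rule add_increasing, simp, simp add: lc_def algebra_simps)+

lemma tau_bound:
  fixes f :: "real \<Rightarrow> real" and i :: int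
  assumes smooth: "\<And>n y. ((deriv ^^ n) f has_real_derivative (deriv ^^ Suc n) f y) (at y)"
    and i: "i = 0 \<or> i = -1"
  shows "\<exists>K\<ge>0. \<forall>h. 0 < h \<and> h \<le> 1 \<longrightarrow> tau5 (\<lambda>j. f (x + real_of_int j * h)) i \<le> K * h ^ 5"
proof -
  define r where "r = real_of_int i"
  have "\<exists>K. \<forall>h. 0 < h \<and> h \<le> 1 \<longrightarrow> \<bar>lc f x [(1,r-2),(-2,r-1),(2,r+1),(-1,r+2)] h\<bar> \<le> K * h ^ 3"
    apply (rule lc_zero[OF smooth])
    subgoal using i by (auto simp: r_def)
    subgoal for n by (auto simp: mom_def less_Suc_eq numeral_eq_Suc power2_eq_square power3_eq_cube algebra_simps)
    done
  then obtain K1 where K1: "\<And>h. 0 < h \<and> h \<le> 1 \<Longrightarrow> \<bar>lc f x [(1,r-2),(-2,r-1),(2,r+1),(-1,r+2)] h\<bar> \<le> K1 * h ^ 3"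
    by blast
  have "\<exists>K. \<forall>h. 0 < h \<and> h \<le> 1 \<longrightarrow> \<bar>lc f x [(1,r-2),(-2,r-1),(2,r),(-2,r+1),(1,r+2)] h\<bar> \<le> K * h ^ 2"
    apply (rule lc_zero[OF smooth])
    subgoal using i by (auto simp: r_def)
    subgoal for n by (auto simp: mom_def less_Suc_eq numeral_eq_Suc power2_eq_square power3_eq_cube algebra_simps)
    done
  then obtain K2 where K2: "\<And>h. 0 < h \<and> h \<le> 1 \<Longrightarrow> \<bar>lc f x [(1,r-2),(-2,r-1),(2,r),(-2,r+1),(1,r+2)] h\<bar> \<le> K2 * h ^ 2"
    by blast
  have "\<exists>K. \<forall>h. 0 < h \<and> h \<le> 1 \<longrightarrow> \<bar>lc f x [(1,r-2),(-4,r-1),(4,r+1),(-1,r+2)] h\<bar> \<le> K * h ^ 1"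
    apply (rule lc_zero[OF smooth])
    subgoal using i by (auto simp: r_def)
    subgoal for n by (auto simp: mom_def less_Suc_eq numeral_eq_Suc power2_eq_square power3_eq_cube algebra_simps)
    done
  then obtain K3 where K3: "\<And>h. 0 < h \<and> h \<le> 1 \<Longrightarrow> \<bar>lc f x [(1,r-2),(-4,r-1),(4,r+1),(-1,r+2)] h\<bar> \<le> K3 * h ^ 1"
    by blast
  have "\<exists>K. \<forall>h. 0 < h \<and> h \<le> 1 \<longrightarrow> \<bar>lc f x [(1,r-2),(-4,r-1),(6,r),(-4,r+1),(1,r+2)] h\<bar> \<le> K * h ^ 4"
    apply (rule lc_zero[OF smooth])
    subgoal using i by (auto simp: r_def)
    subgoal for n by (auto simp: mom_def less_Suc_eq numeral_eq_Suc power2_eq_square power3_eq_cube algebra_simps)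
    done
  then obtain K4 where K4: "\<And>h. 0 < h \<and> h \<le> 1 \<Longrightarrow> \<bar>lc f x [(1,r-2),(-4,r-1),(6,r),(-4,r+1),(1,r+2)] h\<bar> \<le> K4 * h ^ 4"
    by blast
  have K1p: "K1 \<ge> 0" using K1[of 1] by simp
  have K2p: "K2 \<ge> 0" using K2[of 1] by simp
  have K3p: "K3 \<ge> 0" using K3[of 1] by simp
  have K4p: "K4 \<ge> 0" using K4[of 1] by simp
  show ?thesis
  proof (intro exI[of _ "13/12 * K1 * K2 + 1/4 * K3 * K4"] conjI allI impI)
    show "13/12 * K1 * K2 + 1/4 * K3 * K4 \<ge> 0" using K1p K2p K3p K4p by simp
    fix h :: real assume h: "0 < h \<and> h \<le> 1"
    define a where "a = lc f x [(1,r-2),(-2,r-1),(2,r+1),(-1,r+2)] h"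
    define b where "b = lc f x [(1,r-2),(-2,r-1),(2,r),(-2,r+1),(1,r+2)] h"
    define c where "c = lc f x [(1,r-2),(-4,r-1),(4,r+1),(-1,r+2)] h"
    define d where "d = lc f x [(1,r-2),(-4,r-1),(6,r),(-4,r+1),(1,r+2)] h"
    have "tau5 (\<lambda>j. f (x + real_of_int j * h)) i = \<bar>13/12 * a * b + 1/4 * c * d\<bar>"
      unfolding tau5_def beta_diff_eq a_def b_def c_def d_def r_def ..
    also have "\<dots> \<le> 13/12 * (\<bar>a\<bar> * \<bar>b\<bar>) + 1/4 * (\<bar>c\<bar> * \<bar>d\<bar>)"
      by (simp add: abs_mult abs_triangle_ineq[THEN order_trans])
    also have "\<dots> \<le> 13/12 * (K1 * h^3 * (K2 * h^2)) + 1/4 * (K3 * h^1 * (K4 * h^4))"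
      using K1[OF h] K2[OF h] K3[OF h] K4[OF h] K1p K3p h
      by (intro add_mono mult_left_mono mult_mono) (auto simp: a_def b_def c_def d_def)
    also have "\<dots> = (13/12 * K1 * K2 + 1/4 * K3 * K4) * h ^ 5"
      by (simp add: algebra_simps power_Suc[symmetric] flip: power_add)
    finally show "tau5 (\<lambda>j. f (x + real_of_int j * h)) i \<le> (13/12 * K1 * K2 + 1/4 * K3 * K4) * h ^ 5" .
  qed
qed

lemma beta_lb:
  fixes f :: "real \<Rightarrow> real" and i :: int
  assumes smooth: "\<And>n y. ((deriv ^^ n) f has_real_derivative (deriv ^^ Suc n) f y) (at y)"
    and i: "i = 0 \<or> i = -1" and nc: "deriv f x \<noteq> 0"
  shows "eventually (\<lambda>h. 0 < h \<and> h \<le> 1 \<and> (\<forall>m\<le>2. (deriv f x)^2 / 4 * h^2 \<le> weno_beta (\<lambda>j. f (x + real_of_int j * h)) i m)) (at_right 0)"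
proof -
  define r where "r = real_of_int i"
  have E0: "eventually (\<lambda>h. 0 < h \<and> h \<le> 1 \<and> \<bar>deriv f x\<bar> * h \<le> \<bar>lc f x [(1,r-2),(-4,r-1),(3,r)] h\<bar>) (at_right 0)"
    by (rule lc_lower[OF smooth _ _ _ nc]) (use i in \<open>auto simp: r_def mom_def\<close>)
  have E1: "eventually (\<lambda>h. 0 < h \<and> h \<le> 1 \<and> \<bar>deriv f x\<bar> * h \<le> \<bar>lc f x [(-1,r-1),(1,r+1)] h\<bar>) (at_right 0)"
    by (rule lc_lower[OF smooth _ _ _ nc]) (use i in \<open>auto simp: r_def mom_def\<close>)
  have E2: "eventually (\<lambda>h. 0 < h \<and> h \<le> 1 \<and> \<bar>deriv f x\<bar> * h \<le> \<bar>lc f x [(3,r),(-4,r+1),(1,r+2)] h\<bar>) (at_right 0)"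
    by (rule lc_lower[OF smooth _ _ _ nc]) (use i in \<open>auto simp: r_def mom_def\<close>)
  have sq: "\<And>h L. 0 < h \<Longrightarrow> \<bar>deriv f x\<bar> * h \<le> \<bar>L\<bar> \<Longrightarrow> (deriv f x)^2 / 4 * h^2 \<le> 1/4 * L^2"
  proof -
    fix h L :: real assume "0 < h" "\<bar>deriv f x\<bar> * h \<le> \<bar>L\<bar>"
    hence "(\<bar>deriv f x\<bar> * h)^2 \<le> \<bar>L\<bar>^2" by (intro power_mono) auto
    thus "(deriv f x)^2 / 4 * h^2 \<le> 1/4 * L^2" by (simp add: power_mult_distrib)
  qed
  show ?thesis
    using E0 E1 E2
  proof eventually_elim
    case (elim h)
    show ?case
    proof (intro conjI allI impI)
      show "0 < h" "h \<le> 1" using elim by auto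
      fix m :: nat assume m: "m \<le> 2"
      have "m = 0 \<or> m = 1 \<or> m = 2" using m by auto
      moreover have "(deriv f x)^2 / 4 * h^2 \<le> beta0 (\<lambda>j. f (x + real_of_int j * h)) i"
        using sq[of h "lc f x [(1,r-2),(-4,r-1),(3,r)] h"] beta_lower(1)[where f=f and x=x and h=h and i=i, folded r_def] elim
        by linarith
      moreover have "(deriv f x)^2 / 4 * h^2 \<le> beta1 (\<lambda>j. f (x + real_of_int j * h)) i"
        using sq[of h "lc f x [(-1,r-1),(1,r+1)] h"] beta_lower(2)[where f=f and x=x and h=h and i=i, folded r_def] elim
        by linarith
      moreover have "(deriv f x)^2 / 4 * h^2 \<le> beta2 (\<lambda>j. f (x + real_of_int j * h)) i"
        using sq[of h "lc f x [(3,r),(-4,r+1),(1,r+2)] h"] beta_lower(3)[where f=f and x=x and h=h and i=i, folded r_def] elim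
        by linarith
      ultimately show "(deriv f x)^2 / 4 * h^2 \<le> weno_beta (\<lambda>j. f (x + real_of_int j * h)) i m"
        unfolding weno_beta_def by auto
    qed
  qed
qed

lemma weights_final:
  fixes r :: "nat \<Rightarrow> real"
  assumes r: "\<And>l. l < 3 \<Longrightarrow> 0 \<le> r l \<and> r l \<le> E" and m: "m \<le> 2"
  shows "\<bar>dlin m * (1 + r m) / (\<Sum>l<3. dlin l * (1 + r l)) - dlin m\<bar> \<le> E"
proof -
  define X where "X = r 0 / 10 + 6 * r 1 / 10 + 3 * r 2 / 10"
  have S: "(\<Sum>l<3. dlin l * (1 + r l)) = 1 + X"
    by (simp add: numeral_3_eq_3 dlin_def X_def algebra_simps numeral_2_eq_2)
  have r0: "0 \<le> r 0" "r 0 \<le> E" using r[of 0] by auto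
  have r1: "0 \<le> r 1" "r 1 \<le> E" using r[of 1] by auto
  have r2: "0 \<le> r 2" "r 2 \<le> E" using r[of 2] by auto
  have X: "0 \<le> X" "X \<le> E" using r0 r1 r2 by (auto simp: X_def)
  have rm: "0 \<le> r m" "r m \<le> E" using r[of m] m by auto
  have d: "0 \<le> dlin m" "dlin m \<le> 1" by (auto simp: dlin_def)
  have "dlin m * (1 + r m) / (1 + X) - dlin m = dlin m * (r m - X) / (1 + X)"
  proof -
    have "1 + X \<noteq> 0" using X by linarith
    thus ?thesis by (simp add: field_simps)
  qed
  also have "\<bar>\<dots>\<bar> \<le> \<bar>dlin m * (r m - X)\<bar>"
  proof -
    have p: "1 + X \<ge> 1" using X by simp
    have "\<bar>dlin m * (r m - X) / (1 + X)\<bar> = \<bar>dlin m * (r m - X)\<bar> / (1 + X)"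
      using p by (simp add: abs_divide)
    also have "\<dots> \<le> \<bar>dlin m * (r m - X)\<bar>"
      using divide_left_mono[of 1 "1 + X" "\<bar>dlin m * (r m - X)\<bar>"] p by simp
    finally show ?thesis .
  qed
  also have "\<dots> \<le> \<bar>r m - X\<bar>" using d by (simp add: abs_mult mult_left_le_one_le)
  also have "\<dots> \<le> E" using X rm by auto
  finally show ?thesis unfolding S .
qed


lemma main_i:
  fixes f :: "real \<Rightarrow> real" and x :: real and k :: nat
    and \<Phi> :: "real list \<Rightarrow> real" and \<delta> :: "real \<Rightarrow> nat \<Rightarrow> real"
    and C \<kappa> :: real and i :: int
  assumes smooth: "\<And>n y. ((deriv ^^ n) f has_real_derivative (deriv ^^ Suc n) f y) (at y)"
    and noncrit: "deriv f x \<noteq> 0"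
    and d1: "\<And>h. h > 0 \<Longrightarrow> \<delta> h 1 = \<Phi> (stencil x k h)"
    and d0: "(\<lambda>h. \<delta> h 0 - \<Phi> (stencil x k h)) \<in> O[at_right 0](\<lambda>h. h)"
    and d2: "(\<lambda>h. \<delta> h 2 - \<Phi> (stencil x k h)) \<in> O[at_right 0](\<lambda>h. h)"
    and kappa: "\<kappa> > 0"
    and P_gt: "\<And>h. h > 0 \<Longrightarrow> \<Phi> (stencil x k h) + C > \<kappa>"
    and m: "m \<le> 2"
    and i: "i = 0 \<or> i = -1"
  shows "(\<lambda>h. omegaDS (\<lambda>j. f (x + real_of_int j * h)) i (\<delta> h) C m - dlin m)
            \<in> O[at_right 0](\<lambda>h. h ^ 6)"
proof -
  obtain K where K: "K \<ge> 0" "\<And>h. 0 < h \<and> h \<le> 1 \<Longrightarrow> tau5 (\<lambda>j. f (x + real_of_int j * h)) i \<le> K * h ^ 5"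
    using tau_bound[OF smooth i, where x=x] by blast
  define c where "c = (deriv f x)^2 / 4"
  have cpos: "c > 0" using noncrit by (simp add: c_def)
  have B: "eventually (\<lambda>h. 0 < h \<and> h \<le> 1 \<and> (\<forall>m\<le>2. c * h^2 \<le> weno_beta (\<lambda>j. f (x + real_of_int j * h)) i m)) (at_right 0)"
    unfolding c_def by (rule beta_lb[OF smooth i noncrit])
  obtain c0 where c0: "c0 > 0" "eventually (\<lambda>h. norm (\<delta> h 0 - \<Phi> (stencil x k h)) \<le> c0 * norm h) (at_right 0)"
    using landau_o.bigE[OF d0] by blast
  obtain c2 where c2: "c2 > 0" "eventually (\<lambda>h. norm (\<delta> h 2 - \<Phi> (stencil x k h)) \<le> c2 * norm h) (at_right 0)"
    using landau_o.bigE[OF d2] by blast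
  have sm0: "eventually (\<lambda>h. h < \<kappa> / (2 * c0)) (at_right (0::real))"
    unfolding eventually_at_right_field using c0 kappa by (intro exI[of _ "\<kappa> / (2 * c0)"]) auto
  have sm2: "eventually (\<lambda>h. h < \<kappa> / (2 * c2)) (at_right (0::real))"
    unfolding eventually_at_right_field using c2 kappa by (intro exI[of _ "\<kappa> / (2 * c2)"]) auto
  have D: "eventually (\<lambda>h. \<forall>l\<le>2. \<kappa> / 2 \<le> \<delta> h l + C) (at_right 0)"
    using c0(2) c2(2) sm0 sm2 B
  proof eventually_elim
    case (elim h)
    have h: "h > 0" using elim by simp
    have P: "\<Phi> (stencil x k h) + C > \<kappa>" using P_gt[OF h] .
    have "c0 * h < c0 * (\<kappa> / (2 * c0))" using elim c0(1) by (intro mult_strict_left_mono) auto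
    hence e0: "c0 * h < \<kappa> / 2" using c0(1) by simp
    have "c2 * h < c2 * (\<kappa> / (2 * c2))" using elim c2(1) by (intro mult_strict_left_mono) auto
    hence e2: "c2 * h < \<kappa> / 2" using c2(1) by simp
    have a0: "\<bar>\<delta> h 0 - \<Phi> (stencil x k h)\<bar> \<le> c0 * h" using elim h by simp
    have a2: "\<bar>\<delta> h 2 - \<Phi> (stencil x k h)\<bar> \<le> c2 * h" using elim h by simp
    show ?case
    proof (intro allI impI)
      fix l :: nat assume "l \<le> 2"
      hence "l = 0 \<or> l = 1 \<or> l = 2" by auto
      thus "\<kappa> / 2 \<le> \<delta> h l + C"
        using P a0 a2 e0 e2 d1[OF h] by (elim disjE) auto
    qed
  qed
  define c' where "c' = c * (\<kappa> / 2)"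
  have c'pos: "c' > 0" using cpos kappa by (simp add: c'_def)
  define R where "R = (K / c')^2"
  show ?thesis
  proof (rule bigoI[where c=R])
    show "eventually (\<lambda>h. norm (omegaDS (\<lambda>j. f (x + real_of_int j * h)) i (\<delta> h) C m - dlin m) \<le> R * norm (h ^ 6)) (at_right 0)"
      using B D
    proof eventually_elim
      case (elim h)
      let ?g = "\<lambda>j. f (x + real_of_int j * h)"
      have h: "0 < h" "h \<le> 1" using elim by auto
      have tau: "0 \<le> tau5 ?g i" "tau5 ?g i \<le> K * h ^ 5" using K(2)[of h] h by (auto simp: tau5_def)
      have rb: "0 \<le> (tau5 ?g i / betaDS ?g i (\<delta> h) C l)^2 \<and> (tau5 ?g i / betaDS ?g i (\<delta> h) C l)^2 \<le> R * h ^ 6"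
        if l: "l < 3" for l
      proof -
        have wb: "c * h^2 \<le> weno_beta ?g i l" using elim l by auto
        have db: "\<kappa> / 2 \<le> \<delta> h l + C" using elim l by auto
        have bl: "c' * h^2 \<le> betaDS ?g i (\<delta> h) C l"
        proof -
          have "c * h^2 * (\<kappa> / 2) \<le> weno_beta ?g i l * (\<delta> h l + C)"
            using wb db cpos kappa order_trans[OF _ wb, of 0] by (intro mult_mono) auto
          thus ?thesis by (simp add: betaDS_def c'_def algebra_simps)
        qed
        have hp: "0 < c' * h^2" using c'pos h by simp
        have q1: "tau5 ?g i / betaDS ?g i (\<delta> h) C l \<le> K * h ^ 5 / (c' * h^2)"
          using tau bl hp K(1) h by (intro frac_le) auto
        have q2: "K * h ^ 5 / (c' * h^2) = K / c' * h ^ 3"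
          using c'pos h by (simp add: field_simps eval_nat_numeral)
        have q0: "0 \<le> tau5 ?g i / betaDS ?g i (\<delta> h) C l"
          using tau bl hp by simp
        have "(tau5 ?g i / betaDS ?g i (\<delta> h) C l)^2 \<le> (K / c' * h ^ 3)^2"
          using q0 q1 q2 by (intro power_mono) auto
        also have "\<dots> = R * h ^ 6" unfolding R_def power_mult_distrib by (simp flip: power_mult)
        finally show ?thesis by simp
      qed
      have "\<bar>dlin m * (1 + (tau5 ?g i / betaDS ?g i (\<delta> h) C m)^2) / (\<Sum>l<3. dlin l * (1 + (tau5 ?g i / betaDS ?g i (\<delta> h) C l)^2)) - dlin m\<bar> \<le> R * h ^ 6"
        by (rule weights_final[OF rb m])
      thus ?case using h by (simp add: omegaDS_def alphaDS_def)
    qed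
  qed
qed


theorem mainTheorem1:
  fixes f :: "real \<Rightarrow> real" and x :: real and k :: nat
    and \<Phi> :: "real list \<Rightarrow> real" and \<delta> :: "real \<Rightarrow> nat \<Rightarrow> real"
    and C \<kappa> :: real
  assumes smooth: "\<And>n y. ((deriv ^^ n) f has_real_derivative (deriv ^^ Suc n) f y) (at y)"
    and noncrit: "deriv f x \<noteq> 0"
    and d1: "\<And>h. h > 0 \<Longrightarrow> \<delta> h 1 = \<Phi> (stencil x k h)"
    and d0: "(\<lambda>h. \<delta> h 0 - \<Phi> (stencil x k h)) \<in> O[at_right 0](\<lambda>h. h)"
    and d2: "(\<lambda>h. \<delta> h 2 - \<Phi> (stencil x k h)) \<in> O[at_right 0](\<lambda>h. h)"
    and kappa: "\<kappa> > 0"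
    and P_gt: "\<And>h. h > 0 \<Longrightarrow> \<Phi> (stencil x k h) + C > \<kappa>"
    and P_bdd: "(\<lambda>h. \<Phi> (stencil x k h) + C) \<in> O[at_right 0](\<lambda>_. 1)"
    and m: "m \<le> 2"
  shows "(\<lambda>h. omegaDS (\<lambda>j. f (x + real_of_int j * h)) 0 (\<delta> h) C m - dlin m)
            \<in> O[at_right 0](\<lambda>h. h ^ 6)
      \<and> (\<lambda>h. omegaDS (\<lambda>j. f (x + real_of_int j * h)) (-1) (\<delta> h) C m - dlin m)
            \<in> O[at_right 0](\<lambda>h. h ^ 6)"
    using main_i[OF smooth noncrit d1 d0 d2 kappa P_gt m, of 0]
    main_i[OF smooth noncrit d1 d0 d2 kappa P_gt m, of "-1"] by simp

end
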